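(* (a) Let $p,q>0$ and $a_k=e^{pk^q}$, $k\ge1$; then $\lim_{N\to\infty}E[U_j^N]=I(\alpha;j)<\infty$ for all $j\ge2$. (b) The same holds for $a_k=k!$, $k\ge1$. (c) For $p>0$ and the decaying sequence $b_k=e^{-pk}$, $k\ge1$, the limit $\lim_{N\to\infty}E[U_j^N]$ exists and is finite for all $j\ge2$, and equals $I(\alpha;j)$ with $\alpha=\{e^{pk}\}_{k\ge1}$.
   Context: For a positive sequence $\{c_k\}$ and $N\ge2$, coupon type $k\in\{1,\dots,N\}$ has probability $c_k/\sum_{i=1}^Nc_i$; $U_j^N$ is the number of empty album places of the $j$-th collector when the first collector completes her set (each collector passes duplicates to the next one), with $$E[U_j^N]=\sum_{k=1}^N\int_0^\infty c_k e^{-c_k t}\frac{(c_kt)^{j-1}}{(j-1)!}\prod_{i\ne k,\,1\le i\le N}\big(1-e^{-c_i t}\big)\,dt.$$ For a positive sequence $\alpha=\{a_k\}$: $x_\alpha:=\inf\{x\in[0,1]:\sum_k x^{a_k}=\infty\}$, $L(x;\alpha;j):=\sum_{k}a_k^j\frac{x^{a_k}}{1-x^{a_k}}$, $F(x;\alpha):=\prod_{k}(1-x^{a_k})$, $I(\alpha;j):=\frac{1}{(j-1)!}\int_0^{x_\alpha}L(x;\alpha;j)F(x;\alpha)|\ln x|^{j-1}\frac{dx}{x}$. *)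

theory Defs
  imports "HOL-Analysis.Analysis"
begin

text \<open>Sequences are functions nat => real; only the values at k >= 1 are used.\<close>

text \<open>Expected number of empty places E[U_j^N] of the j-th collector, for coupon weights c_1..c_N.\<close>
definition EU :: "(nat \<Rightarrow> real) \<Rightarrow> nat \<Rightarrow> nat \<Rightarrow> real" where
  "EU c N j = (\<Sum>k\<in>{1..N}. (LINT t:{0..}|lborel.
      c k * exp (- c k * t) * (c k * t) ^ (j - 1) / fact (j - 1) *
      (\<Prod>i\<in>{1..N} - {k}. 1 - exp (- c i * t))))"

definition x_alpha :: "(nat \<Rightarrow> real) \<Rightarrow> real" where
  "x_alpha a = Inf {x \<in> {0..1}. \<not> summable (\<lambda>k. x powr a (Suc k))}"

definition L_fun :: "real \<Rightarrow> (nat \<Rightarrow> real) \<Rightarrow> nat \<Rightarrow> real" where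
  "L_fun x a j = (\<Sum>k. a (Suc k) ^ j * x powr a (Suc k) / (1 - x powr a (Suc k)))"

definition F_fun :: "real \<Rightarrow> (nat \<Rightarrow> real) \<Rightarrow> real" where
  "F_fun x a = prodinf (\<lambda>k. 1 - x powr a (Suc k))"

definition I_integrand :: "(nat \<Rightarrow> real) \<Rightarrow> nat \<Rightarrow> real \<Rightarrow> real" where
  "I_integrand a j x = L_fun x a j * F_fun x a * \<bar>ln x\<bar> ^ (j - 1) / x"

definition I_fun :: "(nat \<Rightarrow> real) \<Rightarrow> nat \<Rightarrow> real" where
  "I_fun a j = (1 / fact (j - 1)) * (LINT x:{0<..<x_alpha a}|lborel. I_integrand a j x)"

text \<open>I(alpha;j) is finite: the (nonnegative) integrand is Lebesgue integrable on (0, x_alpha).\<close>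
definition I_finite :: "(nat \<Rightarrow> real) \<Rightarrow> nat \<Rightarrow> bool" where
  "I_finite a j = set_integrable lborel {0<..<x_alpha a} (I_integrand a j)"

end

theory Submission
  imports Defs "HOL-Probability.Distributions" "HOL-Real_Asymp.Real_Asymp"
begin


lemma exp_ge_pow_fact:
  fixes x :: real assumes "0 \<le> x" shows "x ^ n / fact n \<le> exp x"
proof -
  have s: "summable (\<lambda>n. x ^ n /\<^sub>R fact n)" by (rule summable_exp_generic)
  have "(\<Sum>i\<in>{n}. x ^ i /\<^sub>R fact i) \<le> (\<Sum>i. x ^ i /\<^sub>R fact i)"
    by (rule sum_le_suminf[OF s]) (use assms in auto)
  thus ?thesis by (simp add: exp_def divide_inverse mult.commute)
qed

lemma cexp_bound:
  fixes c t :: real assumes c: "0 < c" and t: "0 < t"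
  shows "c ^ m * exp (- c * t) \<le> (fact (Suc m) / t ^ Suc m) * (1 / c)"
proof -
  have "(c*t) ^ Suc m / fact (Suc m) \<le> exp (c * t)"
    by (rule exp_ge_pow_fact) (use c t in simp)
  hence "(c*t) ^ Suc m \<le> fact (Suc m) * exp (c*t)"
    by (simp add: divide_le_eq mult.commute)
  hence "c ^ Suc m * t ^ Suc m \<le> fact (Suc m) * exp (c*t)" by (simp only: power_mult_distrib)
  hence "c ^ Suc m * t ^ Suc m * exp (- c * t) \<le> fact (Suc m) * exp (c*t) * exp (-c*t)"
    by (intro mult_right_mono) auto
  also have "\<dots> = fact (Suc m)" by (simp add: exp_minus field_simps)
  finally have "c ^ Suc m * t ^ Suc m * exp (- c * t) \<le> fact (Suc m)" .
  thus ?thesis using c t by (simp add: field_simps)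
qed

lemma summable_cexp:
  fixes c :: "nat \<Rightarrow> real"
  assumes pos: "\<And>k. 0 < c k" and H2: "summable (\<lambda>k. 1 / c (Suc k))" and t: "0 < t"
  shows "summable (\<lambda>k. c (Suc k) ^ m * exp (- c (Suc k) * t))"
proof (rule summable_comparison_test')
  show "summable (\<lambda>k. (fact (Suc m) / t ^ Suc m) * (1 / c (Suc k)))"
    by (intro summable_mult H2)
  show "norm (c (Suc k) ^ m * exp (- c (Suc k) * t)) \<le> (fact (Suc m) / t ^ Suc m) * (1 / c (Suc k))" for k
    using cexp_bound[OF pos t, of "Suc k" m] pos[of "Suc k"] by simp
qed

lemma powr_as_exp: assumes "0 < (x::real)" shows "x powr y = exp (- y * (- ln x))"
  using assms by (simp add: powr_def mult.commute)

lemma one_minus_exp_le: "0 \<le> u \<Longrightarrow> 1 - exp (- u) \<le> (u::real)"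
  using exp_ge_add_one_self[of "-u"] by simp

lemma inv_one_minus_exp: "0 < u \<Longrightarrow> 1 / (1 - exp (- u)) \<le> (1 + u) / (u::real)"
proof -
  assume u: "0 < u"
  have e: "exp (-u) < 1" using u by simp
  have "1 + u \<le> exp u" by (rule exp_ge_add_one_self)
  hence "u / (1 + u) \<le> 1 - exp (-u)" using u by (simp add: exp_minus field_simps)
  thus ?thesis using u e by (simp add: field_simps)
qed



definition ellx :: "(nat \<Rightarrow> real) \<Rightarrow> nat \<Rightarrow> real \<Rightarrow> nat \<Rightarrow> real" where
  "ellx c j x k = c k ^ j * x powr c k / (1 - x powr c k)"
definition phix :: "(nat \<Rightarrow> real) \<Rightarrow> real \<Rightarrow> nat \<Rightarrow> real" where
  "phix c x k = 1 - x powr c k"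
definition hN :: "(nat \<Rightarrow> real) \<Rightarrow> nat \<Rightarrow> nat \<Rightarrow> real \<Rightarrow> real" where
  "hN c j N x = (\<Sum>k<N. ellx c j x (Suc k)) * (\<Prod>k<N. phix c x (Suc k)) * \<bar>ln x\<bar> ^ (j - 1) / x"

context
  fixes c :: "nat \<Rightarrow> real" and j :: nat
  assumes pos: "\<And>k. 0 < c k" and H2: "summable (\<lambda>k. 1 / c (Suc k))" and j1: "1 \<le> j"
begin

lemma ellx_bound:
  assumes s: "0 < s"
  shows "ellx c j (exp (-s)) k \<le> c k ^ (j-1) * exp (- c k * s) / s + c k ^ j * exp (- c k * s)"
proof -
  have ck: "0 < c k" by (rule pos)
  have pe: "exp (-s) powr c k = exp (- (c k * s))" by (simp add: powr_def)
  have cs: "0 < c k * s" using ck s by simp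
  have e1: "exp (- (c k * s)) < 1" using cs by simp
  have "ellx c j (exp (-s)) k = c k ^ j * exp (- (c k * s)) * (1 / (1 - exp (- (c k * s))))"
    by (simp add: ellx_def pe)
  also have "\<dots> \<le> c k ^ j * exp (- (c k * s)) * ((1 + c k * s) / (c k * s))"
    by (intro mult_left_mono inv_one_minus_exp cs) (use ck in auto)
  also have "\<dots> = c k ^ j / c k * exp (- (c k * s)) / s + c k ^ j * exp (- (c k * s))"
    using ck s by (simp add: field_simps)
  also have "c k ^ j / c k = c k ^ (j-1)"
    using ck j1 by (simp add: power_diff)
  finally show ?thesis by simp
qed

lemma pw_facts:
  assumes x: "0 < x" "x < 1"
  shows "summable (\<lambda>k. x powr c (Suc k))"
    and "summable (\<lambda>k. ellx c j x (Suc k))"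
    and "convergent_prod (\<lambda>k. phix c x (Suc k))"
    and "(\<lambda>N. (\<Sum>k<N. ellx c j x (Suc k))) \<longlonglongrightarrow> L_fun x c j"
    and "(\<lambda>N. (\<Prod>k<N. phix c x (Suc k))) \<longlonglongrightarrow> F_fun x c"
    and "(\<lambda>N. hN c j N x) \<longlonglongrightarrow> I_integrand c j x"
proof -
  define s where "s = - ln x"
  have s: "0 < s" using x by (simp add: s_def)
  have xe: "x = exp (-s)" using x by (simp add: s_def)
  have pe: "\<And>y. x powr y = exp (- y * s)" using x by (simp add: powr_def s_def)
  show sx: "summable (\<lambda>k. x powr c (Suc k))"
    unfolding pe using summable_cexp[OF pos H2 s, of 0] by simp
  show sl: "summable (\<lambda>k. ellx c j x (Suc k))"
  proof (rule summable_comparison_test')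
    show "summable (\<lambda>k. c (Suc k) ^ (j-1) * exp (- c (Suc k) * s) / s + c (Suc k) ^ j * exp (- c (Suc k) * s))"
      by (intro summable_add summable_divide summable_cexp[OF pos H2 s])
    show "norm (ellx c j x (Suc k)) \<le> c (Suc k) ^ (j-1) * exp (- c (Suc k) * s) / s + c (Suc k) ^ j * exp (- c (Suc k) * s)" for k
    proof -
      have "0 \<le> ellx c j x (Suc k)"
        using pos[of "Suc k"] x s by (auto simp: ellx_def pe intro!: divide_nonneg_pos mult_nonneg_nonneg)
      thus ?thesis using ellx_bound[OF s, of "Suc k"] xe by simp
    qed
  qed
  have cp: "convergent_prod (\<lambda>k. 1 + (- (x powr c (Suc k))))"
  proof (rule summable_imp_convergent_prod_real)
    show "summable (\<lambda>k. \<bar>- (x powr c (Suc k))\<bar>)" using sx by simp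
    show "- (x powr c (Suc k)) \<noteq> -1" for k
      using pos[of "Suc k"] s by (simp add: pe)
  qed
  thus cp': "convergent_prod (\<lambda>k. phix c x (Suc k))" by (simp add: phix_def)
  show l1: "(\<lambda>N. (\<Sum>k<N. ellx c j x (Suc k))) \<longlonglongrightarrow> L_fun x c j"
    using summable_LIMSEQ[OF sl] by (simp add: L_fun_def ellx_def)
  have "(\<lambda>n. \<Prod>i\<le>n. phix c x (Suc i)) \<longlonglongrightarrow> F_fun x c"
    using convergent_prod_LIMSEQ[OF cp'] by (simp add: F_fun_def phix_def)
  hence "(\<lambda>n. \<Prod>i<Suc n. phix c x (Suc i)) \<longlonglongrightarrow> F_fun x c"
    by (simp add: lessThan_Suc_atMost)
  thus l2: "(\<lambda>N. (\<Prod>k<N. phix c x (Suc k))) \<longlonglongrightarrow> F_fun x c"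
    by (rule LIMSEQ_imp_Suc)
  show "(\<lambda>N. hN c j N x) \<longlonglongrightarrow> I_integrand c j x"
    unfolding hN_def I_integrand_def
    by (intro tendsto_intros l1 l2) (use x in simp)
qed

end


definition fN :: "(nat \<Rightarrow> real) \<Rightarrow> nat \<Rightarrow> nat \<Rightarrow> real \<Rightarrow> real" where
  "fN c j N t = indicator {0..} t *
     (\<Sum>k\<in>{1..N}. erlang_density (j-1) (c k) t * (\<Prod>i\<in>{1..N} - {k}. 1 - exp (- c i * t)))"

context
  fixes c :: "nat \<Rightarrow> real" and j :: nat
  assumes pos: "\<And>k. 0 < c k" and j2: "2 \<le> j"
begin

lemma erl_integrable: "integrable lborel (erlang_density (j-1) (c k))"
proof (rule integrableI_nonneg)
  show "AE x in lborel. 0 \<le> erlang_density (j - 1) (c k) x"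
    using pos[of k] by (auto intro!: erlang_density_nonneg less_imp_le)
  have "(\<integral>\<^sup>+ x. ennreal (erlang_density (j-1) (c k) x * x ^ 0) \<partial>lborel) = 1"
    using nn_integral_erlang_ith_moment[OF pos[of k], of "j-1" 0] by simp
  thus "(\<integral>\<^sup>+ x. ennreal (erlang_density (j-1) (c k) x) \<partial>lborel) < \<infinity>" by simp
qed simp

lemma prod_phi_bounds:
  assumes "0 \<le> t"
  shows "0 \<le> (\<Prod>i\<in>A. 1 - exp (- c i * t))" "(\<Prod>i\<in>A. 1 - exp (- c i * t)) \<le> 1"
proof -
  have b: "0 \<le> 1 - exp (- c i * t) \<and> 1 - exp (- c i * t) \<le> 1" for i
    using pos[of i] assms by (auto simp: mult_nonneg_nonneg)
  show "0 \<le> (\<Prod>i\<in>A. 1 - exp (- c i * t))" using b by (intro prod_nonneg) auto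
  show "(\<Prod>i\<in>A. 1 - exp (- c i * t)) \<le> 1" using b by (intro prod_le_1) auto
qed

lemma EU_eq: "EU c N j = integral\<^sup>L lborel (fN c j N)"
proof -
  have eqk: "(LINT t:{0..}|lborel. c k * exp (- c k * t) * (c k * t) ^ (j - 1) / fact (j - 1) *
      (\<Prod>i\<in>{1..N} - {k}. 1 - exp (- c i * t)))
    = integral\<^sup>L lborel (\<lambda>t. indicator {0..} t * (erlang_density (j-1) (c k) t * (\<Prod>i\<in>{1..N} - {k}. 1 - exp (- c i * t))))" for k
    unfolding set_lebesgue_integral_def
  proof (intro Bochner_Integration.integral_cong refl)
    fix t :: real
    have jj: "Suc (j - 1) = j" using j2 by simp
    have cj: "c k ^ j = c k * c k ^ (j-1)" by (metis jj power_Suc)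
    show "indicator {0..} t *\<^sub>R (c k * exp (- c k * t) * (c k * t) ^ (j - 1) / fact (j - 1) *
      (\<Prod>i\<in>{1..N} - {k}. 1 - exp (- c i * t))) =
      indicator {0..} t * (erlang_density (j-1) (c k) t * (\<Prod>i\<in>{1..N} - {k}. 1 - exp (- c i * t)))"
      by (cases "0 \<le> t") (auto simp: erlang_density_def cj jj power_mult_distrib)
  qed
  have int: "integrable lborel (\<lambda>t. indicator {0..} t * (erlang_density (j-1) (c k) t * (\<Prod>i\<in>{1..N} - {k}. 1 - exp (- c i * t))))" for k
  proof (rule Bochner_Integration.integrable_bound[OF erl_integrable[of k]])
    show "AE x in lborel. norm (indicator {0..} x * (erlang_density (j-1) (c k) x * (\<Prod>i\<in>{1..N} - {k}. 1 - exp (- c i * x))))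
       \<le> norm (erlang_density (j-1) (c k) x)"
    proof (intro AE_I2)
      fix x :: real
      show "norm (indicator {0..} x * (erlang_density (j-1) (c k) x * (\<Prod>i\<in>{1..N} - {k}. 1 - exp (- c i * x))))
       \<le> norm (erlang_density (j-1) (c k) x)"
      proof (cases "0 \<le> x")
        case True
        have e: "0 \<le> erlang_density (j-1) (c k) x" using pos[of k] by simp
        show ?thesis using prod_phi_bounds[OF True, of "{1..N} - {k}"] e True
          by (simp add: abs_mult mult_left_le)
      qed simp
    qed
  qed measurable
  show ?thesis
    unfolding EU_def fN_def eqk sum_distrib_left
    by (rule Bochner_Integration.integral_sum[symmetric]) (use int in simp)
qed

end


lemma epow: "exp (- (t::real)) powr y = exp (- y * t)"
  by (simp add: powr_def)

context
  fixes c :: "nat \<Rightarrow> real" and j :: nat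
  assumes pos: "\<And>k. 0 < c k" and j2: "2 \<le> j"
begin

lemma fN_hN:
  assumes t: "0 < t"
  shows "fN c j N t = hN c j N (exp (- t)) * exp (- t) / fact (j - 1)"
proof -
  define A where "A = {1..N}"
  have finA: "finite A" by (simp add: A_def)
  have phinz: "1 - exp (- c k * t) \<noteq> 0" for k using pos[of k] t by simp
  have s1: "(\<Sum>k<N. ellx c j (exp (-t)) (Suc k)) = (\<Sum>k\<in>A. ellx c j (exp (-t)) k)"
    unfolding A_def using sum.atLeast1_atMost_eq[of "ellx c j (exp (-t))" N] by simp
  have p1: "(\<Prod>k<N. phix c (exp (-t)) (Suc k)) = (\<Prod>k\<in>A. 1 - exp (- c k * t))"
    unfolding A_def using prod.atLeast1_atMost_eq[of "phix c (exp (-t))" N] by (simp add: phix_def epow)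
  have key: "(\<Sum>k\<in>A. ellx c j (exp (-t)) k) * (\<Prod>k\<in>A. 1 - exp (- c k * t))
      = (\<Sum>k\<in>A. c k ^ j * exp (- c k * t) * (\<Prod>i\<in>A - {k}. 1 - exp (- c i * t)))"
    unfolding sum_distrib_right
  proof (rule sum.cong[OF refl])
    fix k assume k: "k \<in> A"
    have "(\<Prod>i\<in>A. 1 - exp (- c i * t)) = (1 - exp (- c k * t)) * (\<Prod>i\<in>A - {k}. 1 - exp (- c i * t))"
      by (rule prod.remove[OF finA k])
    thus "ellx c j (exp (-t)) k * (\<Prod>i\<in>A. 1 - exp (- c i * t)) = c k ^ j * exp (- c k * t) * (\<Prod>i\<in>A - {k}. 1 - exp (- c i * t))"
      using phinz[of k] by (simp add: ellx_def epow)
  qed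
  have jj: "Suc (j - 1) = j" using j2 by simp
  have cj: "c k * c k ^ (j-1) = c k ^ j" for k by (metis jj power_Suc)
  have cj': "c k * c k ^ (j - Suc 0) = c k ^ j" for k using cj by simp
  have f: "fN c j N t = t ^ (j-1) / fact (j-1) * (\<Sum>k\<in>A. c k ^ j * exp (- c k * t) * (\<Prod>i\<in>A - {k}. 1 - exp (- c i * t)))"
    unfolding fN_def A_def[symmetric] sum_distrib_left
    using t by (intro sum.cong refl) (simp add: erlang_density_def jj cj cj')
  show ?thesis
    unfolding f hN_def s1 p1 key using t by (simp add: field_simps)
qed

end


definition gfun :: "(nat \<Rightarrow> real) \<Rightarrow> nat \<Rightarrow> real \<Rightarrow> real" where
  "gfun c j t = indicator {0<..} t * (I_integrand c j (exp (- t)) * exp (- t) / fact (j - 1))"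
definition Dk :: "(nat \<Rightarrow> real) \<Rightarrow> nat \<Rightarrow> nat \<Rightarrow> real \<Rightarrow> real" where
  "Dk c j k t = erlang_density (j-1) (c k) t * (\<Prod>i\<in>{1..<k}. 1 - exp (- c i * t))"
definition wfun :: "(nat \<Rightarrow> real) \<Rightarrow> nat \<Rightarrow> real \<Rightarrow> real" where
  "wfun c j t = (\<Sum>k. Dk c j (Suc k) t)"

lemma fN_measurable[measurable]: "fN c j N \<in> borel_measurable borel"
  unfolding fN_def by measurable

lemma Dk_measurable[measurable]: "Dk c j k \<in> borel_measurable borel"
  unfolding Dk_def by measurable

context
  fixes c :: "nat \<Rightarrow> real" and j :: nat
  assumes pos: "\<And>k. 0 < c k" and j2: "2 \<le> j" and H2: "summable (\<lambda>k. 1 / c (Suc k))"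
begin

lemma erl0: "erlang_density (j-1) l 0 = 0"
  using j2 by (simp add: erlang_density_def)
lemma erl0': "erlang_density (j - Suc 0) l 0 = 0"
  using j2 by (simp add: erlang_density_def)

lemma fN_lim: "(\<lambda>N. fN c j N t) \<longlonglongrightarrow> gfun c j t"
proof (cases "0 < t")
  case True
  have x: "0 < exp (-t)" "exp (-t) < 1" using True by auto
  have "(\<lambda>N. hN c j N (exp (-t)) * exp (- t) / fact (j - 1)) \<longlonglongrightarrow> I_integrand c j (exp (- t)) * exp (- t) / fact (j - 1)"
  proof -
    have fz: "fact (j-1) \<noteq> (0::real)" by simp
    show ?thesis
      by (intro tendsto_divide tendsto_mult tendsto_const pw_facts(6)[where c=c and j=j, OF pos H2 _ x] fz) (use j2 in simp)
  qed
  thus ?thesis using True by (simp add: fN_hN[where c=c and j=j, OF pos j2 True] gfun_def)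
next
  case False
  hence "fN c j N t = 0" for N
    by (cases "t = 0") (auto simp: fN_def erl0 erl0')
  thus ?thesis using False by (simp add: gfun_def)
qed

lemma gfun_measurable: "gfun c j \<in> borel_measurable lborel"
  by (rule borel_measurable_LIMSEQ_real[OF fN_lim]) simp

lemma Dk_nonneg: "0 \<le> Dk c j k t"
proof (cases "0 \<le> t")
  case True thus ?thesis using prod_phi_bounds(1)[where c=c and j=j, OF pos j2 True] pos[of k]
    by (simp add: Dk_def)
qed (simp add: Dk_def erlang_density_def)

lemma Dk_le_erl: "Dk c j k t \<le> erlang_density (j-1) (c k) t"
proof (cases "0 \<le> t")
  case True thus ?thesis using prod_phi_bounds[where c=c and j=j, OF pos j2 True, of "{1..<k}"] pos[of k]
    by (simp add: Dk_def mult_left_le)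
qed (simp add: Dk_def erlang_density_def)

lemma Dk_summable: "summable (\<lambda>k. Dk c j (Suc k) t)"
proof (cases "0 < t")
  case True
  have jj: "Suc (j - 1) = j" using j2 by simp
  have cj: "c k * c k ^ (j-1) = c k ^ j" for k by (metis jj power_Suc)
  have cj': "c k * c k ^ (j - Suc 0) = c k ^ j" for k using cj by simp
  show ?thesis
  proof (rule summable_comparison_test')
    show "summable (\<lambda>k. t ^ (j-1) / fact (j-1) * (c (Suc k) ^ j * exp (- c (Suc k) * t)))"
      by (intro summable_mult summable_cexp[where c=c, OF pos H2 True])
    show "norm (Dk c j (Suc k) t) \<le> t ^ (j-1) / fact (j-1) * (c (Suc k) ^ j * exp (- c (Suc k) * t))" for k
      using Dk_nonneg[of "Suc k" t] Dk_le_erl[of "Suc k" t] True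
      by (simp add: erlang_density_def jj cj' mult_ac)
  qed
next
  case False
  hence "Dk c j (Suc k) t = 0" for k
    by (cases "t = 0") (use j2 in \<open>auto simp: Dk_def erl0 erlang_density_def\<close>)
  thus ?thesis by simp
qed

lemma wfun_nonneg: "0 \<le> wfun c j t"
  unfolding wfun_def by (intro suminf_nonneg Dk_summable Dk_nonneg)

lemma fN_le_w: "norm (fN c j N t) \<le> wfun c j t"
proof (cases "0 \<le> t")
  case True
  have each: "erlang_density (j-1) (c k) t * (\<Prod>i\<in>{1..N} - {k}. 1 - exp (- c i * t)) \<le> Dk c j k t"
    if k: "k \<in> {1..N}" for k
  proof -
    have sub: "{1..<k} \<subseteq> {1..N} - {k}" using k by auto
    have "(\<Prod>i\<in>{1..N} - {k}. 1 - exp (- c i * t)) =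
       (\<Prod>i\<in>({1..N} - {k}) - {1..<k}. 1 - exp (- c i * t)) * (\<Prod>i\<in>{1..<k}. 1 - exp (- c i * t))"
      by (rule prod.subset_diff[OF sub]) simp
    also have "\<dots> \<le> 1 * (\<Prod>i\<in>{1..<k}. 1 - exp (- c i * t))"
      by (intro mult_right_mono prod_phi_bounds[where c=c and j=j, OF pos j2 True])
    finally show ?thesis unfolding Dk_def
      using pos[of k] by (intro mult_left_mono) simp_all
  qed
  have nn: "0 \<le> fN c j N t"
  proof -
    have "0 \<le> erlang_density (j-1) (c k) t * (\<Prod>i\<in>{1..N} - {k}. 1 - exp (- c i * t))" for k
      using prod_phi_bounds(1)[where c=c and j=j, OF pos j2 True] erlang_density_nonneg[OF less_imp_le[OF pos[of k]]]
      by (rule mult_nonneg_nonneg[rotated])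
    hence "0 \<le> (\<Sum>k\<in>{1..N}. erlang_density (j-1) (c k) t * (\<Prod>i\<in>{1..N} - {k}. 1 - exp (- c i * t)))"
      by (intro sum_nonneg) blast
    thus ?thesis unfolding fN_def using True by simp
  qed
  have "fN c j N t \<le> (\<Sum>k\<in>{1..N}. Dk c j k t)"
  proof -
    have "(\<Sum>k\<in>{1..N}. erlang_density (j-1) (c k) t * (\<Prod>i\<in>{1..N} - {k}. 1 - exp (- c i * t))) \<le> (\<Sum>k\<in>{1..N}. Dk c j k t)"
      by (rule sum_mono) (rule each)
    thus ?thesis unfolding fN_def using True by simp
  qed
  also have "\<dots> = (\<Sum>k<N. Dk c j (Suc k) t)"
    using sum.atLeast1_atMost_eq[of "\<lambda>k. Dk c j k t" N] by simp
  also have "\<dots> \<le> wfun c j t" unfolding wfun_def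
    by (rule sum_le_suminf[OF Dk_summable]) (auto intro: Dk_nonneg)
  finally show ?thesis using nn by simp
next
  case False thus ?thesis using wfun_nonneg by (simp add: fN_def)
qed

end


definition Bseq_c :: "(nat \<Rightarrow> real) \<Rightarrow> nat \<Rightarrow> nat \<Rightarrow> real" where
  "Bseq_c c j m = (\<Prod>i\<in>{1..m}. c i) * fact (j - 1 + m) / (fact (j - 1) * c (Suc m) ^ m)"

context
  fixes c :: "nat \<Rightarrow> real" and j :: nat
  assumes pos: "\<And>k. 0 < c k" and j2: "2 \<le> j" and H2: "summable (\<lambda>k. 1 / c (Suc k))"
    and H3: "(\<lambda>k. real (j + k) * (c k / c (Suc k)) ^ k) \<longlonglongrightarrow> 0"
begin

lemma wfun_measurable: "wfun c j \<in> borel_measurable lborel"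
proof (rule borel_measurable_LIMSEQ_real)
  fix x :: real
  show "(\<lambda>n. \<Sum>k<n. Dk c j (Suc k) x) \<longlonglongrightarrow> wfun c j x"
    unfolding wfun_def by (rule summable_LIMSEQ[OF Dk_summable[where c=c and j=j, OF pos j2 H2]])
qed simp

lemma Dk_bound: "Dk c j (Suc m) t \<le> erlang_density (j-1) (c (Suc m)) t * t ^ m * (\<Prod>i\<in>{1..m}. c i)"
proof (cases "0 \<le> t")
  case True
  have "(\<Prod>i\<in>{1..<Suc m}. 1 - exp (- c i * t)) \<le> (\<Prod>i\<in>{1..<Suc m}. c i * t)"
  proof (rule prod_mono)
    fix i assume "i \<in> {1..<Suc m}"
    show "0 \<le> 1 - exp (- c i * t) \<and> 1 - exp (- c i * t) \<le> c i * t"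
      using pos[of i] True one_minus_exp_le[of "c i * t"] by (auto simp: mult_nonneg_nonneg)
  qed
  also have "\<dots> = (\<Prod>i\<in>{1..m}. c i) * t ^ m"
    by (simp add: prod.distrib atLeastLessThanSuc_atLeastAtMost)
  finally have "(\<Prod>i\<in>{1..<Suc m}. 1 - exp (- c i * t)) \<le> (\<Prod>i\<in>{1..m}. c i) * t ^ m" .
  hence "Dk c j (Suc m) t \<le> erlang_density (j-1) (c (Suc m)) t * ((\<Prod>i\<in>{1..m}. c i) * t ^ m)"
    unfolding Dk_def using pos[of "Suc m"] by (intro mult_left_mono) auto
  thus ?thesis by (simp add: mult_ac)
qed (simp add: Dk_def erlang_density_def)

lemma nn_Dk: "(\<integral>\<^sup>+ t. ennreal (Dk c j (Suc m) t) \<partial>lborel) \<le> ennreal (Bseq_c c j m)"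
proof -
  have P: "0 \<le> (\<Prod>i\<in>{1..m}. c i)" using pos by (intro prod_nonneg) (auto intro: less_imp_le)
  have "(\<integral>\<^sup>+ t. ennreal (Dk c j (Suc m) t) \<partial>lborel) \<le>
        (\<integral>\<^sup>+ t. ennreal (\<Prod>i\<in>{1..m}. c i) * ennreal (erlang_density (j-1) (c (Suc m)) t * t ^ m) \<partial>lborel)"
  proof (rule nn_integral_mono)
    fix t :: real
    have e: "0 \<le> erlang_density (j-1) (c (Suc m)) t * t ^ m"
      by (cases "0 \<le> t") (use pos[of "Suc m"] in \<open>auto simp: erlang_density_def\<close>)
    show "ennreal (Dk c j (Suc m) t) \<le> ennreal (\<Prod>i\<in>{1..m}. c i) * ennreal (erlang_density (j-1) (c (Suc m)) t * t ^ m)"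
      using Dk_bound[of m t] P e by (simp add: ennreal_mult'[symmetric] mult_ac ennreal_leI)
  qed
  also have "\<dots> = ennreal (\<Prod>i\<in>{1..m}. c i) * (\<integral>\<^sup>+ t. ennreal (erlang_density (j-1) (c (Suc m)) t * t ^ m) \<partial>lborel)"
    by (rule nn_integral_cmult) measurable
  also have "\<dots> = ennreal (\<Prod>i\<in>{1..m}. c i) * ennreal (fact (j - 1 + m) / (fact (j - 1) * c (Suc m) ^ m))"
    using nn_integral_erlang_ith_moment[OF pos[of "Suc m"], of "j-1" m] pos[of "Suc m"]
    by (simp add: ennreal_divide_eq_top_iff divide_ennreal ennreal_mult'' ennreal_of_nat_eq_real_of_nat)
  also have "\<dots> = ennreal (Bseq_c c j m)"
    unfolding Bseq_c_def using P pos[of "Suc m"] by (simp add: ennreal_mult'[symmetric] mult_ac)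
  finally show ?thesis .
qed

lemma Bseq_pos: "0 < Bseq_c c j m"
  unfolding Bseq_c_def using pos by (intro divide_pos_pos mult_pos_pos prod_pos) auto

lemma Bseq_ratio: "Bseq_c c j (Suc m) = Bseq_c c j m * (real (j + m) * (c (Suc m) / c (Suc (Suc m))) ^ Suc m)"
proof -
  have e1: "j - 1 + Suc m = Suc (j - 1 + m)" by simp
  have e2: "real (Suc (j - 1 + m)) = real (j + m)" using j2 by simp
  have f: "fact (j - 1 + Suc m) = real (j + m) * fact (j - 1 + m)"
    unfolding e1 fact_Suc e2 by simp
  have p: "(\<Prod>i\<in>{1..Suc m}. c i) = (\<Prod>i\<in>{1..m}. c i) * c (Suc m)"
    by (simp add: prod.cl_ivl_Suc)
  show ?thesis unfolding Bseq_c_def f p using pos[of "Suc m"] pos[of "Suc (Suc m)"]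
    by (simp add: field_simps power_divide)
qed

lemma Bseq_summable: "summable (Bseq_c c j)"
proof -
  from H3 have "eventually (\<lambda>k. real (j + k) * (c k / c (Suc k)) ^ k < 1/2) sequentially"
    by (rule order_tendstoD) simp
  then obtain K where K: "\<And>k. k \<ge> K \<Longrightarrow> real (j + k) * (c k / c (Suc k)) ^ k < 1/2"
    by (auto simp: eventually_sequentially)
  show ?thesis
  proof (rule summable_ratio_test[of "1/2" K])
    fix m assume m: "m \<ge> K"
    have q: "0 \<le> (c (Suc m) / c (Suc (Suc m))) ^ Suc m" using pos[of "Suc m"] pos[of "Suc (Suc m)"] by simp
    have "real (j + m) * (c (Suc m) / c (Suc (Suc m))) ^ Suc m \<le> real (j + Suc m) * (c (Suc m) / c (Suc (Suc m))) ^ Suc m"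
      by (intro mult_right_mono q) simp
    also have "\<dots> < 1/2" using K[of "Suc m"] m by simp
    finally have r: "real (j + m) * (c (Suc m) / c (Suc (Suc m))) ^ Suc m \<le> 1/2" by simp
    show "norm (Bseq_c c j (Suc m)) \<le> 1/2 * norm (Bseq_c c j m)"
    proof -
      have "Bseq_c c j (Suc m) \<le> Bseq_c c j m * (1/2)"
        unfolding Bseq_ratio[of m] using Bseq_pos[of m] r by (intro mult_left_mono) auto
      thus ?thesis using Bseq_pos[of m] Bseq_pos[of "Suc m"] by simp
    qed
  qed simp
qed

lemma wfun_integrable: "integrable lborel (wfun c j)"
proof (rule integrableI_nonneg)
  show "wfun c j \<in> borel_measurable lborel" by (rule wfun_measurable)
  show "AE x in lborel. 0 \<le> wfun c j x"
    by (intro AE_I2 wfun_nonneg[where c=c and j=j, OF pos j2 H2])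
  have "(\<integral>\<^sup>+ t. ennreal (wfun c j t) \<partial>lborel) = (\<integral>\<^sup>+ t. (\<Sum>k. ennreal (Dk c j (Suc k) t)) \<partial>lborel)"
    unfolding wfun_def
    by (intro nn_integral_cong suminf_ennreal2[symmetric] Dk_nonneg[where c=c and j=j, OF pos j2]
        Dk_summable[where c=c and j=j, OF pos j2 H2] H2)
  also have "\<dots> = (\<Sum>k. \<integral>\<^sup>+ t. ennreal (Dk c j (Suc k) t) \<partial>lborel)"
    by (rule nn_integral_suminf) measurable
  also have "\<dots> \<le> (\<Sum>k. ennreal (Bseq_c c j k))"
    by (intro suminf_le nn_Dk) auto
  also have "\<dots> = ennreal (suminf (Bseq_c c j))"
    by (intro suminf_ennreal2 Bseq_summable less_imp_le[OF Bseq_pos])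
  also have "\<dots> < \<infinity>" by simp
  finally show "(\<integral>\<^sup>+ t. ennreal (wfun c j t) \<partial>lborel) < \<infinity>" .
qed

lemma main_limit:
  shows "integrable lborel (gfun c j)"
    and "(\<lambda>N. EU c N j) \<longlonglongrightarrow> integral\<^sup>L lborel (gfun c j)"
proof -
  note dc = integrable_dominated_convergence[OF gfun_measurable[where c=c and j=j, OF pos j2 H2]
     _ wfun_integrable, of "\<lambda>N. fN c j N"]
     integral_dominated_convergence[OF gfun_measurable[where c=c and j=j, OF pos j2 H2]
     _ wfun_integrable, of "\<lambda>N. fN c j N"]
  have lim: "AE x in lborel. (\<lambda>N. fN c j N x) \<longlonglongrightarrow> gfun c j x"
    by (intro AE_I2 fN_lim[where c=c and j=j, OF pos j2 H2])
  have bd: "AE x in lborel. norm (fN c j N x) \<le> wfun c j x" for N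
    by (intro AE_I2 fN_le_w[where c=c and j=j, OF pos j2 H2])
  show "integrable lborel (gfun c j)" using dc(1)[OF _ lim bd] by simp
  show "(\<lambda>N. EU c N j) \<longlonglongrightarrow> integral\<^sup>L lborel (gfun c j)"
    unfolding EU_eq[where c=c and j=j, OF pos j2] using dc(2)[OF _ lim bd] by simp
qed

end


lemma hN_measurable[measurable]: "hN c j N \<in> borel_measurable borel"
  unfolding hN_def ellx_def phix_def by measurable

lemma exp_image: "(\<lambda>t::real. exp (- t)) ` {0<..} = {0<..<1}"
proof
  show "(\<lambda>t::real. exp (- t)) ` {0<..} \<subseteq> {0<..<1}" by auto
  show "{0<..<1} \<subseteq> (\<lambda>t::real. exp (- t)) ` {0<..}"
  proof
    fix x :: real assume x: "x \<in> {0<..<1}"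
    hence "x = exp (- (- ln x))" "- ln x \<in> {0<..}" by auto
    thus "x \<in> (\<lambda>t::real. exp (- t)) ` {0<..}" by blast
  qed
qed

context
  fixes c :: "nat \<Rightarrow> real" and j :: nat
  assumes pos: "\<And>k. 0 < c k" and j2: "2 \<le> j" and H2: "summable (\<lambda>k. 1 / c (Suc k))"
    and H3: "(\<lambda>k. real (j + k) * (c k / c (Suc k)) ^ k) \<longlonglongrightarrow> 0"
begin

lemma xalpha: "x_alpha c = 1"
proof -
  have "{x \<in> {0..1}. \<not> summable (\<lambda>k. x powr c (Suc k))} = {1}"
  proof (intro equalityI subsetI)
    fix x assume x: "x \<in> {x \<in> {0..1}. \<not> summable (\<lambda>k. x powr c (Suc k))}"
    show "x \<in> {1}"
    proof (rule ccontr)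
      assume "x \<notin> {1}"
      with x have "x = 0 \<or> (0 < x \<and> x < 1)" by auto
      thus False
      proof
        assume "x = 0" thus False using x by simp
      next
        assume "0 < x \<and> x < 1"
        thus False using x pw_facts(1)[where c=c and j=j, OF pos H2 _] j2 by auto
      qed
    qed
  next
    fix x assume "x \<in> {1::real}"
    thus "x \<in> {x \<in> {0..1}. \<not> summable (\<lambda>k. x powr c (Suc k))}"
      by (simp add: summable_const_iff)
  qed
  thus ?thesis unfolding x_alpha_def by simp
qed

lemma I_part:
  shows "set_integrable lborel {0<..<1} (I_integrand c j)"
    and "(LINT x:{0<..<1}|lborel. I_integrand c j x) = fact (j - 1) * integral\<^sup>L lborel (gfun c j)"
proof -
  let ?f = "I_integrand c j"
  let ?F1 = "\<lambda>t. \<bar>- exp (- t)\<bar> * ?f (exp (- t))"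
  define b where "b = fact (j - 1) * integral\<^sup>L lborel (gfun c j)"
  have gi: "integrable lborel (gfun c j)" by (rule main_limit(1)[OF pos j2 H2 H3])
  have eqF: "indicator {0<..} t *\<^sub>R ?F1 t = fact (j - 1) * gfun c j t" for t :: real
    by (simp add: gfun_def)
  have i1: "integrable lborel (\<lambda>t. indicator {0<..} t *\<^sub>R ?F1 t)"
    unfolding eqF using gi by simp
  have m1: "(\<lambda>t. indicator {0<..} t *\<^sub>R ?F1 t) \<in> borel_measurable lborel"
    using i1 by (rule borel_measurable_integrable)
  have i1': "?F1 absolutely_integrable_on {0<..}"
    unfolding set_integrable_def using i1 integrable_completion[OF m1] by simp
  have "integral {0<..} ?F1 = (LINT t:{0<..}|lebesgue. ?F1 t)"
    by (rule set_lebesgue_integral_eq_integral(2)[symmetric, OF i1'])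
  also have "\<dots> = integral\<^sup>L lborel (\<lambda>t. indicator {0<..} t *\<^sub>R ?F1 t)"
    unfolding set_lebesgue_integral_def using integral_completion[OF m1] by simp
  also have "\<dots> = b" unfolding eqF b_def by simp
  finally have int1: "integral {0<..} ?F1 = b" .
  have cov: "?F1 absolutely_integrable_on {0<..} \<and> integral {0<..} ?F1 = b
     \<longleftrightarrow> ?f absolutely_integrable_on ((\<lambda>t. exp (- t)) ` {0<..}) \<and> integral ((\<lambda>t. exp (- t)) ` {0<..}) ?f = b"
    by (rule has_absolute_integral_change_of_variables_1')
       (auto intro!: derivative_eq_intros simp: inj_on_def)
  with i1' int1 have R: "?f absolutely_integrable_on {0<..<1}" "integral {0<..<1} ?f = b"
    by (auto simp: exp_image)
  have m2: "(\<lambda>x. indicator {0<..<1} x *\<^sub>R ?f x) \<in> borel_measurable lborel"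
  proof (rule borel_measurable_LIMSEQ_real[where u="\<lambda>N x. indicator {0<..<1} x * hN c j N x"])
    fix x :: real
    show "(\<lambda>N. indicator {0<..<1} x * hN c j N x) \<longlonglongrightarrow> indicator {0<..<1} x *\<^sub>R ?f x"
    proof (cases "x \<in> {0<..<1}")
      case True
      thus ?thesis using pw_facts(6)[where c=c and j=j, OF pos H2 _] j2 by simp
    qed simp
  qed simp
  show si: "set_integrable lborel {0<..<1} ?f"
    using R(1) unfolding set_integrable_def using integrable_completion[OF m2] by simp
  have "(LINT x:{0<..<1}|lborel. ?f x) = (LINT x:{0<..<1}|lebesgue. ?f x)"
    unfolding set_lebesgue_integral_def using integral_completion[OF m2] by simp
  also have "\<dots> = integral {0<..<1} ?f"
    by (rule set_lebesgue_integral_eq_integral(2)[OF R(1)])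
  finally show "(LINT x:{0<..<1}|lborel. ?f x) = fact (j - 1) * integral\<^sup>L lborel (gfun c j)"
    using R(2) b_def by simp
qed

theorem general:
  shows "I_finite c j \<and> (\<lambda>N. EU c N j) \<longlonglongrightarrow> I_fun c j"
proof
  show "I_finite c j" unfolding I_finite_def xalpha by (rule I_part(1))
  have "I_fun c j = integral\<^sup>L lborel (gfun c j)"
    unfolding I_fun_def xalpha I_part(2) by simp
  thus "(\<lambda>N. EU c N j) \<longlonglongrightarrow> I_fun c j" using main_limit(2)[OF pos j2 H2 H3] by simp
qed

end


lemma powr_diff_bound:
  fixes x q :: real assumes x: "0 < x" and q: "0 < q"
  shows "(x + 1) powr q - x powr q \<ge> q * x powr q / (x + 1)"
proof -
  have l: "ln (1 + 1/x) \<ge> 1 / (x + 1)"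
  proof -
    have "ln (x / (x + 1)) \<le> x / (x + 1) - 1" by (rule ln_le_minus_one) (use x in simp)
    also have "\<dots> = - (1 / (x + 1))" using x by (simp add: field_simps)
    finally have "ln (x / (x + 1)) \<le> - (1 / (x + 1))" .
    moreover have "ln (x / (x + 1)) = - ln (1 + 1/x)"
      using x by (simp add: ln_div field_simps)
    ultimately show ?thesis by simp
  qed
  have xp: "0 < 1 + 1/x" using x by (simp add: add_pos_pos)
  have "(1 + 1/x) powr q = exp (q * ln (1 + 1/x))"
    using xp by (simp add: powr_def mult.commute)
  also have "\<dots> \<ge> 1 + q * ln (1 + 1/x)" by (rule exp_ge_add_one_self)
  finally have e1: "(1 + 1/x) powr q \<ge> 1 + q * ln (1 + 1/x)" .
  have "q * (1 / (x + 1)) \<le> q * ln (1 + 1/x)" by (rule mult_left_mono[OF l]) (use q in simp)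
  hence "(1 + 1/x) powr q \<ge> 1 + q / (x + 1)" using e1 by simp
  moreover have "(x + 1) powr q = x powr q * (1 + 1/x) powr q"
  proof -
    have h: "x * (1 + 1/x) = x + 1" using x by (simp add: field_simps)
    have "(x + 1) powr q = (x * (1 + 1/x)) powr q" by (simp only: h)
    also have "\<dots> = x powr q * (1 + 1/x) powr q" using x xp by (simp add: powr_mult)
    finally show ?thesis .
  qed
  ultimately have "(x + 1) powr q \<ge> x powr q * (1 + q / (x + 1))"
    using x by (simp add: mult_left_mono)
  thus ?thesis by (simp add: field_simps)
qed

lemma caseA_H2:
  fixes p q :: real assumes p: "0 < p" and q: "0 < q"
  shows "summable (\<lambda>k. 1 / exp (p * real (Suc k) powr q))"
proof -
  have "(\<lambda>k::nat. exp (- p * real k powr q)) \<in> O(\<lambda>k. 1 / real k ^ 2)"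
    using p q by real_asymp
  hence s: "summable (\<lambda>k::nat. exp (- p * real k powr q))"
    by (rule summable_comparison_test_bigo[rotated])
       (use inverse_power_summable[of 2] in \<open>simp add: inverse_eq_divide\<close>)
  show ?thesis using summable_ignore_initial_segment[OF s, of 1] by (simp add: exp_minus inverse_eq_divide)
qed

lemma caseA_H3:
  fixes p q :: real assumes p: "0 < p" and q: "0 < q"
  shows "(\<lambda>k. real (j + k) * (exp (p * real k powr q) / exp (p * real (Suc k) powr q)) ^ k) \<longlonglongrightarrow> 0"
proof (rule tendsto_sandwich)
  show "eventually (\<lambda>k. 0 \<le> real (j + k) * (exp (p * real k powr q) / exp (p * real (Suc k) powr q)) ^ k) sequentially"
    by simp
  show "(\<lambda>k. 0) \<longlonglongrightarrow> (0::real)" by simp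
  have lim: "((\<lambda>k::nat. real (j + k) * exp (- (p * q) * (real k * real k powr q / (real k + 1)))) \<longlonglongrightarrow> 0)"
    using p q by real_asymp
  show "(\<lambda>k::nat. real (j + k) * exp (- (p * q) * (real k * real k powr q / (real k + 1)))) \<longlonglongrightarrow> 0"
    by (rule lim)
  show "eventually (\<lambda>k. real (j + k) * (exp (p * real k powr q) / exp (p * real (Suc k) powr q)) ^ k
     \<le> real (j + k) * exp (- (p * q) * (real k * real k powr q / (real k + 1)))) sequentially"
  proof (rule eventually_sequentiallyI[of 1])
    fix k :: nat assume k: "1 \<le> k"
    have x: "0 < real k" using k by simp
    have b: "real (Suc k) powr q - real k powr q \<ge> q * real k powr q / (real k + 1)"
      using powr_diff_bound[OF x q] by (simp add: add.commute)
    have "(exp (p * real k powr q) / exp (p * real (Suc k) powr q)) ^ k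
        = exp (real k * (p * real k powr q - p * real (Suc k) powr q))"
      by (simp add: exp_of_nat_mult exp_diff)
    also have "\<dots> \<le> exp (- (p * q) * (real k * real k powr q / (real k + 1)))"
    proof -
      have pk: "0 \<le> p * real k" using p by simp
      have "p * real k * (q * real k powr q / (real k + 1)) \<le> p * real k * (real (Suc k) powr q - real k powr q)"
        by (rule mult_left_mono[OF b pk])
      thus ?thesis by (simp add: algebra_simps)
    qed
    finally show "real (j + k) * (exp (p * real k powr q) / exp (p * real (Suc k) powr q)) ^ k
     \<le> real (j + k) * exp (- (p * q) * (real k * real k powr q / (real k + 1)))"
      by (intro mult_left_mono) auto
  qed
qed

lemma caseB_H2: "summable (\<lambda>k. 1 / (fact (Suc k) :: real))"
proof -
  have s: "summable (\<lambda>n. 1 / (fact n :: real))"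
    using summable_exp_generic[of "1::real"] by (simp add: divide_inverse)
  show ?thesis using summable_ignore_initial_segment[OF s, of 1] by simp
qed

lemma caseB_H3: "(\<lambda>k. real (j + k) * ((fact k :: real) / fact (Suc k)) ^ k) \<longlonglongrightarrow> 0"
proof (rule tendsto_sandwich)
  show "eventually (\<lambda>k. 0 \<le> real (j + k) * ((fact k :: real) / fact (Suc k)) ^ k) sequentially" by simp
  show "(\<lambda>k. 0) \<longlonglongrightarrow> (0::real)" by simp
  show "(\<lambda>k::nat. real (j + k) / (real k + 1) ^ 2) \<longlonglongrightarrow> 0" by real_asymp
  show "eventually (\<lambda>k. real (j + k) * ((fact k :: real) / fact (Suc k)) ^ k \<le> real (j + k) / (real k + 1) ^ 2) sequentially"
  proof (rule eventually_sequentiallyI[of 2])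
    fix k :: nat assume k: "2 \<le> k"
    have "(fact k :: real) / fact (Suc k) = fact k / ((real k + 1) * fact k)" by (simp add: fact_Suc add.commute)
    also have "\<dots> = 1 / (real k + 1)" using fact_gt_zero[of k, where 'a=real] by simp
    finally have e: "(fact k :: real) / fact (Suc k) = 1 / (real k + 1)" .
    have "(real k + 1) ^ 2 \<le> (real k + 1) ^ k" by (rule power_increasing) (use k in auto)
    hence "(1 / (real k + 1)) ^ k \<le> 1 / (real k + 1) ^ 2"
      by (simp add: power_one_over divide_le_eq_1 frac_le)
    hence "real (j + k) * (1 / (real k + 1)) ^ k \<le> real (j + k) * (1 / (real k + 1) ^ 2)"
      by (intro mult_left_mono) auto
    thus "real (j + k) * ((fact k :: real) / fact (Suc k)) ^ k \<le> real (j + k) / (real k + 1) ^ 2"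
      unfolding e by simp
  qed
qed



lemma EU_cong:
  assumes "\<And>k. k \<in> {1..N} \<Longrightarrow> c k = d k"
  shows "EU c N j = EU d N j"
  unfolding EU_def
proof (rule sum.cong[OF refl])
  fix k assume k: "k \<in> {1..N}"
  have pc: "(\<Prod>i\<in>{1..N}-{k}. 1 - exp (- c i * t)) = (\<Prod>i\<in>{1..N}-{k}. 1 - exp (- d i * t))" for t
    by (rule prod.cong) (auto simp: assms)
  show "(LINT t:{0..}|lborel. c k * exp (- c k * t) * (c k * t) ^ (j - 1) / fact (j - 1) *
          (\<Prod>i\<in>{1..N} - {k}. 1 - exp (- c i * t))) =
        (LINT t:{0..}|lborel. d k * exp (- d k * t) * (d k * t) ^ (j - 1) / fact (j - 1) *
          (\<Prod>i\<in>{1..N} - {k}. 1 - exp (- d i * t)))"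
    by (simp only: assms[OF k] pc)
qed

definition EUterm :: "(nat \<Rightarrow> real) \<Rightarrow> nat \<Rightarrow> nat \<Rightarrow> nat \<Rightarrow> real \<Rightarrow> real" where
  "EUterm c N j k t = c k * exp (- c k * t) * (c k * t) ^ (j - 1) / fact (j - 1) *
          (\<Prod>i\<in>{1..N} - {k}. 1 - exp (- c i * t))"

lemma EU_alt: "EU c N j = (\<Sum>k\<in>{1..N}. LINT t:{0..}|lborel. EUterm c N j k t)"
  by (simp add: EU_def EUterm_def)

lemma EU_scale:
  assumes lam: "0 < lam"
  shows "EU (\<lambda>k. lam * c k) N j = EU c N j"
  unfolding EU_alt
proof (rule sum.cong[OF refl])
  fix k
  define T where "T = (\<lambda>(c::nat \<Rightarrow> real) t::real. EUterm c N j k t)"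
  have "(LINT t:{0..}|lborel. T c t) = integral\<^sup>L lborel (\<lambda>t. indicator {0..} t *\<^sub>R T c t)"
    by (simp add: set_lebesgue_integral_def)
  also have "\<dots> = \<bar>lam\<bar> *\<^sub>R integral\<^sup>L lborel (\<lambda>x. indicator {0..} (0 + lam * x) *\<^sub>R T c (0 + lam * x))"
    by (rule lborel_integral_real_affine) (use lam in simp)
  also have "\<dots> = integral\<^sup>L lborel (\<lambda>x. lam * (indicator {0..} (0 + lam * x) *\<^sub>R T c (0 + lam * x)))"
    using lam by simp
  also have "\<dots> = integral\<^sup>L lborel (\<lambda>t. indicator {0..} t *\<^sub>R T (\<lambda>k. lam * c k) t)"
  proof (rule Bochner_Integration.integral_cong[OF refl])
    fix x :: real
    have ind: "indicator {0..} (lam * x) = (indicator {0..} x :: real)"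
      using lam by (simp add: indicator_def zero_le_mult_iff)
    show "lam * (indicator {0..} (0 + lam * x) *\<^sub>R T c (0 + lam * x)) = indicator {0..} x *\<^sub>R T (\<lambda>k. lam * c k) x"
      by (simp add: ind T_def EUterm_def mult_ac)
  qed
  also have "\<dots> = (LINT t:{0..}|lborel. T (\<lambda>k. lam * c k) t)"
    by (simp add: set_lebesgue_integral_def)
  finally show "(LINT t:{0..}|lborel. EUterm (\<lambda>k. lam * c k) N j k t) = (LINT t:{0..}|lborel. EUterm c N j k t)"
    by (simp add: T_def)
qed

lemma EU_rev: "EU (\<lambda>k. c (Suc N - k)) N j = EU c N j"
  unfolding EU_def
proof (rule sum.reindex_bij_witness[of _ "\<lambda>k. Suc N - k" "\<lambda>k. Suc N - k"])
  fix a assume a: "a \<in> {1..N}"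
  show "Suc N - (Suc N - a) = a" using a by auto
  show "Suc N - a \<in> {1..N}" using a by auto
  have pr: "(\<Prod>i\<in>{1..N} - {Suc N - a}. 1 - exp (- c i * t)) = (\<Prod>i\<in>{1..N} - {a}. 1 - exp (- c (Suc N - i) * t))" for t
    by (rule prod.reindex_bij_witness[of _ "\<lambda>k. Suc N - k" "\<lambda>k. Suc N - k"]) (use a in auto)
  show "(LINT t:{0..}|lborel. c (Suc N - a) * exp (- c (Suc N - a) * t) * (c (Suc N - a) * t) ^ (j - 1) / fact (j - 1) *
          (\<Prod>i\<in>{1..N} - {Suc N - a}. 1 - exp (- c i * t))) =
        (LINT t:{0..}|lborel. c (Suc N - a) * exp (- c (Suc N - a) * t) * (c (Suc N - a) * t) ^ (j - 1) / fact (j - 1) *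
          (\<Prod>i\<in>{1..N} - {a}. 1 - exp (- c (Suc N - i) * t)))"
    by (simp only: pr)
next
  fix b assume b: "b \<in> {1..N}"
  show "Suc N - (Suc N - b) = b" using b by auto
  show "Suc N - b \<in> {1..N}" using b by auto
qed

lemma EU_exp_neg:
  fixes p :: real
  shows "EU (\<lambda>k. exp (- p * real k)) N j = EU (\<lambda>k. exp (p * real k)) N j"
proof -
  have "EU (\<lambda>k. exp (- p * real k)) N j = EU (\<lambda>k. exp (- p * real (Suc N)) * exp (p * real (Suc N - k))) N j"
  proof (rule EU_cong)
    fix k assume k: "k \<in> {1..N}"
    hence "real (Suc N - k) = real (Suc N) - real k" by (simp add: of_nat_diff)
    thus "exp (- p * real k) = exp (- p * real (Suc N)) * exp (p * real (Suc N - k))"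
      by (simp add: exp_add[symmetric] algebra_simps)
  qed
  also have "\<dots> = EU (\<lambda>k. exp (p * real (Suc N - k))) N j"
    by (rule EU_scale) simp
  also have "\<dots> = EU (\<lambda>k. exp (p * real k)) N j"
    by (rule EU_rev)
  finally show ?thesis .
qed



lemma caseA:
  fixes p q :: real assumes p: "0 < p" and q: "0 < q" and j: "2 \<le> j"
  shows "I_finite (\<lambda>k::nat. exp (p * real k powr q)) j \<and>
         (\<lambda>N. EU (\<lambda>k::nat. exp (p * real k powr q)) N j) \<longlonglongrightarrow> I_fun (\<lambda>k::nat. exp (p * real k powr q)) j"
  by (rule general[where c="\<lambda>k::nat. exp (p * real k powr q)" and j=j])
     (use caseA_H2[OF p q] caseA_H3[OF p q] j in simp_all)

lemma caseB:
  assumes j: "2 \<le> j"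
  shows "I_finite (\<lambda>k::nat. fact k :: real) j \<and>
         (\<lambda>N. EU (\<lambda>k::nat. fact k :: real) N j) \<longlonglongrightarrow> I_fun (\<lambda>k::nat. fact k :: real) j"
  by (rule general[where c="\<lambda>k::nat. fact k :: real" and j=j])
     (use caseB_H2 caseB_H3 j in simp_all)

theorem mainTheorem13:
  shows
  "(\<forall>(p::real) (q::real). p > 0 \<longrightarrow> q > 0 \<longrightarrow>
      (\<forall>j::nat. j \<ge> 2 \<longrightarrow>
         (let a = (\<lambda>k::nat. exp (p * real k powr q)) in
            I_finite a j \<and> (\<lambda>N. EU a N j) \<longlonglongrightarrow> I_fun a j)))
   \<and> (\<forall>j::nat. j \<ge> 2 \<longrightarrow>
         (let a = (\<lambda>k::nat. fact k :: real) in
            I_finite a j \<and> (\<lambda>N. EU a N j) \<longlonglongrightarrow> I_fun a j))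
   \<and> (\<forall>p::real. p > 0 \<longrightarrow>
      (\<forall>j::nat. j \<ge> 2 \<longrightarrow>
         (let b = (\<lambda>k::nat. exp (- p * real k)); a = (\<lambda>k::nat. exp (p * real k)) in
            I_finite a j \<and> (\<lambda>N. EU b N j) \<longlonglongrightarrow> I_fun a j)))"
proof (intro conjI allI impI)
  fix p q :: real and j :: nat
  assume "p > 0" "q > 0" "j \<ge> 2"
  thus "let a = (\<lambda>k::nat. exp (p * real k powr q)) in I_finite a j \<and> (\<lambda>N. EU a N j) \<longlonglongrightarrow> I_fun a j"
    using caseA by (simp add: Let_def)
next
  fix j :: nat assume "j \<ge> 2"
  thus "let a = (\<lambda>k::nat. fact k :: real) in I_finite a j \<and> (\<lambda>N. EU a N j) \<longlonglongrightarrow> I_fun a j"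
    using caseB by (simp add: Let_def)
next
  fix p :: real and j :: nat
  assume p: "p > 0" and j: "j \<ge> 2"
  have e: "(\<lambda>k::nat. exp (p * real k)) = (\<lambda>k::nat. exp (p * real k powr 1))" by simp
  have A: "I_finite (\<lambda>k::nat. exp (p * real k)) j \<and> (\<lambda>N. EU (\<lambda>k::nat. exp (p * real k)) N j) \<longlonglongrightarrow> I_fun (\<lambda>k::nat. exp (p * real k)) j"
    unfolding e by (rule caseA[OF p _ j]) simp
  show "let b = (\<lambda>k::nat. exp (- p * real k)); a = (\<lambda>k::nat. exp (p * real k)) in
            I_finite a j \<and> (\<lambda>N. EU b N j) \<longlonglongrightarrow> I_fun a j"
    using A unfolding Let_def EU_exp_neg by simp
qed


end
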